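(* Let $\alpha=(\alpha_1,\ldots,\alpha_n)$ be a composition, $\sigma\in S_n$, and $i\in\{1,\ldots,n-1\}$ with $\alpha_i=\alpha_{i+1}$. Let $T\in\mathrm{NAF}(\alpha,\sigma)$ and let $U=\Omega_{0,h}(T)$ for some $h\in\{0,\ldots,\alpha_i\}$, and suppose $U$ is non-attacking. Then for all $r\in\{0,\ldots,h-1\}$, $$\mathrm{wt}_{r}(U)\,\rho_r(U)=\mathrm{wt}_{r}(T)\,\rho_r(T).$$
   Context: Permutations are in one-line notation; $\sigma s_i$ is $\sigma$ with the entries in positions $i,i+1$ exchanged. A composition is a sequence of nonnegative integers. The skyline diagram is $\mathrm{dg}(\alpha)=\{(j,r):1\le j\le n,\ 1\le r\le\alpha_j\}$ ($j$ = column, $r$ = row) and the augmented diagram is $\mathrm{adg}(\alpha)=\mathrm{dg}(\alpha)\cup\{(j,0):1\le j\le n\}$ (row $0$ is the basement). For $u=(j,r)\in\mathrm{dg}(\alpha)$: $\mathrm{south}(u)=(j,r-1)$; $\mathrm{leg}(u)=\alpha_j-r$; the left arm set is $\{(j',r-1)\in\mathrm{adg}(\alpha):j'<j,\ \alpha_{j'}<\alpha_j\}$, the right arm set is $\{(j',r)\in\mathrm{dg}(\alpha):j'>j,\ \alpha_{j'}\le\alpha_j\}$, $\mathrm{Arm}(u)$ is their union and $\mathrm{arm}(u)=|\mathrm{Arm}(u)|$. Two boxes of $\mathrm{adg}(\alpha)$ attack each other if they are in the same row, or in consecutive rows with the box in the higher row strictly to the right of the box in the lower row. A filling of shape $\alpha$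 and basement $\tau\in S_n$ is a map $T:\mathrm{adg}(\alpha)\to\{1,\ldots,n\}$ with $T(j,0)=\tau_j$; $\mathrm{NAF}(\alpha,\tau)$ is the set of non-attacking ones (attacking boxes have distinct entries). For integers $a,b$ let $\chi(a,b)=1$ if $a>b$ and $0$ otherwise, and $\chi(a,b,c)=\chi(a,b)+\chi(b,c)-\chi(a,c)$. For a non-attacking filling $T$: a descent is $u\in\mathrm{dg}(\alpha)$ with $T(u)>T(\mathrm{south}(u))$; a triple is $(u,v,w)$ with $u\in\mathrm{dg}(\alpha)$, $w=\mathrm{south}(u)$, $v\in\mathrm{Arm}(u)$, an inversion triple if $\chi(T(u),T(v),T(w))=1$ and a coinversion triple otherwise. For $r\ge0$, let $\mathrm{maj}_{r+1}(T)=\sum(\mathrm{leg}(u)+1)$ over descents $u$ in row $r+1$, let $\mathrm{coinv}_{r,r+1}(T)$ be the number of coinversion triples $(u,v,w)$ with $u$ in row $r+1$, and $\mathrm{wt}_r(T)=q^{\mathrm{maj}_{r+1}(T)}t^{\mathrm{coinv}_{r,r+1}(T)}\prod_{u\in\mathrm{dg}(\alpha)\text{ in row }r+1,\ T(u)\ne T(\mathrm{south}(u))}\frac{1-t}{1-q^{1+\mathrm{leg}(u)}t^{1+\mathrm{arm}(u)}}$ (empty sums are $0$, empty products $1$). Fix $i$ with $\alpha_i=\alpha_{i+1}$. For a filling $T$ and $0\le r\le\alpha_i$, $\mathrm{swap}_r(T)$ exchanges the entries of boxes $(i,r)$ and $(i+1,r)$, and $\Omega_{0,h}=\mathrm{swap}_h\circ\cdots\circ\mathrm{swap}_0$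 (so $\Omega_{0,h}(T)$ has basement $\sigma s_i$). For a non-attacking filling $T$ (any basement) and $0\le r\le\alpha_i-1$, let $a=T(i,r)$, $b=T(i+1,r)$, $c=T(i,r+1)$, $d=T(i+1,r+1)$, $A=\mathrm{arm}(i+1,r+1)$, $\ell=\mathrm{leg}(i+1,r+1)$, and define $\rho_r(T)\in\mathbb{Q}(q,t)$: if $a,b,c,d$ are distinct, $\rho_r(T)=0$ when $\chi(c,d,a)=\chi(c,d,b)$ and $\rho_r(T)=1$ when $\chi(c,d,a)=\chi(d,c,b)$; if exactly three of them are distinct, then $\rho_r(T)=0$ if $b=c$, $\rho_r(T)=1$ if $b=d$, and $\rho_r(T)=t^{1-\chi(d,a,b)}\frac{1-q^{\ell+1}t^{A+1}}{1-q^{\ell+1}t^{A+2}}$ if $a=c$; if $a=c$ and $b=d$, $\rho_r(T)=1$. *)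

theory Defs
  imports "HOL-Computational_Algebra.Polynomial" "HOL-Computational_Algebra.Fraction_Field"
begin

(* Compositions are lists alpha of length n; column j (1-based) has height alpha ! (j-1).
   Boxes are pairs (column, row). Fillings are functions on boxes; only values on adg matter.
   Permutations tau in S_n are lists in one-line notation. *)

definition ht :: "nat list \<Rightarrow> nat \<Rightarrow> nat" where
  "ht \<alpha> j = \<alpha> ! (j - 1)"

definition dg :: "nat list \<Rightarrow> (nat \<times> nat) set" where
  "dg \<alpha> = {(j, r). 1 \<le> j \<and> j \<le> length \<alpha> \<and> 1 \<le> r \<and> r \<le> ht \<alpha> j}"

definition adg :: "nat list \<Rightarrow> (nat \<times> nat) set" where
  "adg \<alpha> = dg \<alpha> \<union> {(j, 0) | j. 1 \<le> j \<and> j \<le> length \<alpha>}"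

definition south :: "nat \<times> nat \<Rightarrow> nat \<times> nat" where
  "south u = (fst u, snd u - 1)"

definition leg :: "nat list \<Rightarrow> nat \<times> nat \<Rightarrow> nat" where
  "leg \<alpha> u = ht \<alpha> (fst u) - snd u"

definition Arm :: "nat list \<Rightarrow> nat \<times> nat \<Rightarrow> (nat \<times> nat) set" where
  "Arm \<alpha> u =
     {(j', snd u - 1) | j'. (j', snd u - 1) \<in> adg \<alpha> \<and> j' < fst u \<and> ht \<alpha> j' < ht \<alpha> (fst u)}
   \<union> {(j', snd u) | j'. (j', snd u) \<in> dg \<alpha> \<and> j' > fst u \<and> ht \<alpha> j' \<le> ht \<alpha> (fst u)}"

definition arm :: "nat list \<Rightarrow> nat \<times> nat \<Rightarrow> nat" where
  "arm \<alpha> u = card (Arm \<alpha> u)"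

definition attack :: "nat \<times> nat \<Rightarrow> nat \<times> nat \<Rightarrow> bool" where
  "attack u v \<longleftrightarrow> u \<noteq> v \<and>
     (snd u = snd v
      \<or> (snd u = snd v + 1 \<and> fst u > fst v)
      \<or> (snd v = snd u + 1 \<and> fst v > fst u))"

definition is_perm :: "nat \<Rightarrow> nat list \<Rightarrow> bool" where
  "is_perm n \<sigma> \<longleftrightarrow> length \<sigma> = n \<and> distinct \<sigma> \<and> set \<sigma> = {1..n}"

definition perm_swap :: "nat list \<Rightarrow> nat \<Rightarrow> nat list" where
  "perm_swap \<sigma> i = \<sigma>[i - 1 := \<sigma> ! i, i := \<sigma> ! (i - 1)]"

definition is_filling :: "nat list \<Rightarrow> nat list \<Rightarrow> (nat \<times> nat \<Rightarrow> nat) \<Rightarrow> bool" where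
  "is_filling \<alpha> \<tau> T \<longleftrightarrow>
     (\<forall>u\<in>adg \<alpha>. T u \<in> {1..length \<alpha>}) \<and>
     (\<forall>j. 1 \<le> j \<and> j \<le> length \<alpha> \<longrightarrow> T (j, 0) = \<tau> ! (j - 1))"

definition nonattacking :: "nat list \<Rightarrow> (nat \<times> nat \<Rightarrow> nat) \<Rightarrow> bool" where
  "nonattacking \<alpha> T \<longleftrightarrow> (\<forall>u\<in>adg \<alpha>. \<forall>v\<in>adg \<alpha>. attack u v \<longrightarrow> T u \<noteq> T v)"

definition NAF :: "nat list \<Rightarrow> nat list \<Rightarrow> (nat \<times> nat \<Rightarrow> nat) set" where
  "NAF \<alpha> \<tau> = {T. is_filling \<alpha> \<tau> T \<and> nonattacking \<alpha> T}"

definition chi :: "nat \<Rightarrow> nat \<Rightarrow> int" where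
  "chi a b = (if a > b then 1 else 0)"

definition chi3 :: "nat \<Rightarrow> nat \<Rightarrow> nat \<Rightarrow> int" where
  "chi3 a b c = chi a b + chi b c - chi a c"

definition maj_row :: "nat list \<Rightarrow> (nat \<times> nat \<Rightarrow> nat) \<Rightarrow> nat \<Rightarrow> nat" where
  "maj_row \<alpha> T k = (\<Sum>u\<in>{u\<in>dg \<alpha>. snd u = k \<and> T u > T (south u)}. leg \<alpha> u + 1)"

definition coinv_rows :: "nat list \<Rightarrow> (nat \<times> nat \<Rightarrow> nat) \<Rightarrow> nat \<Rightarrow> nat" where
  "coinv_rows \<alpha> T r = card {(u, v). u \<in> dg \<alpha> \<and> snd u = r + 1 \<and> v \<in> Arm \<alpha> u
                                 \<and> chi3 (T u) (T v) (T (south u)) \<noteq> 1}"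

definition wt :: "'a::field \<Rightarrow> 'a \<Rightarrow> nat list \<Rightarrow> (nat \<times> nat \<Rightarrow> nat) \<Rightarrow> nat \<Rightarrow> 'a" where
  "wt q t \<alpha> T r = q ^ maj_row \<alpha> T (r + 1) * t ^ coinv_rows \<alpha> T r *
     (\<Prod>u\<in>{u\<in>dg \<alpha>. snd u = r + 1 \<and> T u \<noteq> T (south u)}.
        (1 - t) / (1 - q ^ (1 + leg \<alpha> u) * t ^ (1 + arm \<alpha> u)))"

definition rho :: "'a::field \<Rightarrow> 'a \<Rightarrow> nat list \<Rightarrow> nat \<Rightarrow> (nat \<times> nat \<Rightarrow> nat) \<Rightarrow> nat \<Rightarrow> 'a" where
  "rho q t \<alpha> i T r =
    (let a = T (i, r); b = T (i + 1, r); c = T (i, r + 1); d = T (i + 1, r + 1);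
         A = arm \<alpha> (i + 1, r + 1); l = leg \<alpha> (i + 1, r + 1)
     in if card {a, b, c, d} = 4 then
          (if chi3 c d a = chi3 c d b then 0
           else if chi3 c d a = chi3 d c b then 1 else 0)
        else if card {a, b, c, d} = 3 then
          (if b = c then 0
           else if b = d then 1
           else if a = c then
             t powi (1 - chi3 d a b) * (1 - q ^ (l + 1) * t ^ (A + 1)) / (1 - q ^ (l + 1) * t ^ (A + 2))
           else 0)
        else if a = c \<and> b = d then 1
        else 0)"

definition swap_row :: "nat \<Rightarrow> nat \<Rightarrow> (nat \<times> nat \<Rightarrow> 'b) \<Rightarrow> (nat \<times> nat \<Rightarrow> 'b)" where
  "swap_row i r T = T((i, r) := T (i + 1, r), (i + 1, r) := T (i, r))"

fun Omega :: "nat \<Rightarrow> nat \<Rightarrow> (nat \<times> nat \<Rightarrow> 'b) \<Rightarrow> (nat \<times> nat \<Rightarrow> 'b)" where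
  "Omega i 0 T = swap_row i 0 T"
| "Omega i (Suc h) T = swap_row i (Suc h) (Omega i h T)"

(* Q(q,t) realised as the fraction field of Z[q][t]; q and t are the indeterminates *)
type_synonym qt_field = "int poly poly fract"

definition qv :: qt_field where "qv = Fract [:[:0, 1:]:] 1"
definition tv :: qt_field where "tv = Fract [:0, 1:] 1"

end

theory Submission
  imports Defs
begin

definition sw :: "nat \<Rightarrow> nat \<Rightarrow> nat" where
  "sw i j = (if j = i then Suc i else if j = Suc i then i else j)"

lemma sw_sw[simp]: "sw i (sw i j) = j" by (auto simp: sw_def)

lemma Omega_val: "Omega i h T (j, s) = (if s \<le> h then T (sw i j, s) else T (j, s))"
  by (induction h arbitrary: j s) (auto simp: swap_row_def sw_def)

lemma finite_dg: "finite (dg \<alpha>)"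
proof -
  have "dg \<alpha> \<subseteq> Sigma {1..length \<alpha>} (\<lambda>j. {1..ht \<alpha> j})" by (auto simp: dg_def)
  thus ?thesis by (rule finite_subset) auto
qed

lemma finite_adg: "finite (adg \<alpha>)"
proof -
  have "adg \<alpha> \<subseteq> Sigma {1..length \<alpha>} (\<lambda>j. {0..ht \<alpha> j})" by (auto simp: adg_def dg_def)
  thus ?thesis by (rule finite_subset) auto
qed

lemma finite_Arm: "finite (Arm \<alpha> u)"
proof -
  have "Arm \<alpha> u \<subseteq> adg \<alpha> \<union> dg \<alpha>" by (auto simp: Arm_def)
  thus ?thesis using finite_dg finite_adg by (metis finite_Un finite_subset)
qed

lemma Arm_Suc: "v \<in> Arm \<alpha> (j, Suc r) \<longleftrightarrow>
   (\<exists>j'. v = (j', r) \<and> (j', r) \<in> adg \<alpha> \<and> j' < j \<and> ht \<alpha> j' < ht \<alpha> j) \<or>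
   (\<exists>j'. v = (j', Suc r) \<and> (j', Suc r) \<in> dg \<alpha> \<and> j < j' \<and> ht \<alpha> j' \<le> ht \<alpha> j)"
  by (auto simp: Arm_def)

lemma card_insert_filter: "finite B \<Longrightarrow> x \<notin> B \<Longrightarrow>
   card {v \<in> insert x B. P v} = (if P x then 1 else 0) + card {v \<in> B. P v}"
proof -
  assume f: "finite B" and x: "x \<notin> B"
  have "{v \<in> insert x B. P v} = (if P x then insert x {v \<in> B. P v} else {v \<in> B. P v})" by auto
  thus ?thesis using f x by simp
qed

lemma chi3_dist: "chi3 x y z = 0 \<or> chi3 x y z = 1"
  by (auto simp: chi3_def chi_def)

lemma chi3_swap: "x \<noteq> y \<Longrightarrow> chi3 y x z = 1 - chi3 x y z"
  by (auto simp: chi3_def chi_def)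

lemma chi3_xyx: "x \<noteq> y \<Longrightarrow> chi3 x y x = 1"
  by (auto simp: chi3_def chi_def)


definition NN :: "nat list \<Rightarrow> (nat \<times> nat \<Rightarrow> nat) \<Rightarrow> nat \<times> nat \<Rightarrow> nat" where
  "NN al F u = card {v \<in> Arm al u. chi3 (F u) (F v) (F (south u)) \<noteq> 1}"


definition GG :: "'a::field \<Rightarrow> 'a \<Rightarrow> nat list \<Rightarrow> nat \<times> nat \<Rightarrow> 'a" where
  "GG q t al u = (1 - t) / (1 - q ^ (1 + leg al u) * t ^ (1 + arm al u))"


definition P0 :: "'a::field \<Rightarrow> 'a \<Rightarrow> nat list \<Rightarrow> nat \<Rightarrow> nat \<Rightarrow> (nat \<times> nat \<Rightarrow> nat) \<Rightarrow> 'a" where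
  "P0 q t al ii rr F = (\<Prod>u\<in>{u\<in>dg al. snd u = Suc rr} - {(ii, Suc rr)} - {(Suc ii, Suc rr)}.
      if F u \<noteq> F (south u) then GG q t al u else 1)"


context
  fixes \<alpha> :: "nat list" and i r :: nat
  assumes i1: "1 \<le> i" and il: "i < length \<alpha>" and hteq: "ht \<alpha> i = ht \<alpha> (Suc i)"
    and rh: "Suc r \<le> ht \<alpha> i"
begin

lemma ht_sw[simp]: "ht \<alpha> (sw i j) = ht \<alpha> j" using hteq by (auto simp: sw_def)

lemma dg_sw[simp]: "(sw i j, s) \<in> dg \<alpha> \<longleftrightarrow> (j, s) \<in> dg \<alpha>"
  using i1 il hteq by (auto simp: sw_def dg_def)

lemma adg_sw[simp]: "(sw i j, s) \<in> adg \<alpha> \<longleftrightarrow> (j, s) \<in> adg \<alpha>"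
  using i1 il hteq by (auto simp: sw_def adg_def dg_def)

lemma sw_lt1: "j \<noteq> i \<Longrightarrow> j \<noteq> Suc i \<Longrightarrow> (sw i j' < j \<longleftrightarrow> j' < j)"
  by (auto simp: sw_def)
lemma sw_lt2: "j \<noteq> i \<Longrightarrow> j \<noteq> Suc i \<Longrightarrow> (j < sw i j' \<longleftrightarrow> j < j')"
  by (auto simp: sw_def)

lemma Arm_sw: "j \<noteq> i \<Longrightarrow> j \<noteq> Suc i \<Longrightarrow>
   (sw i j', s) \<in> Arm \<alpha> (j, Suc r') \<longleftrightarrow> (j', s) \<in> Arm \<alpha> (j, Suc r')"
proof -
  assume j: "j \<noteq> i" "j \<noteq> Suc i"
  have "(j', s) \<in> Arm \<alpha> (j, Suc r')" if "(sw i j', s) \<in> Arm \<alpha> (j, Suc r')" for j'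
  proof -
    have "(sw i (sw i j'), s) \<in> Arm \<alpha> (j, Suc r')"
      using that unfolding Arm_Suc using sw_lt1[OF j] sw_lt2[OF j] by auto
    thus ?thesis by simp
  qed
  moreover have "(sw i j', s) \<in> Arm \<alpha> (j, Suc r')" if "(j', s) \<in> Arm \<alpha> (j, Suc r')"
    using that unfolding Arm_Suc using sw_lt1[OF j] sw_lt2[OF j] by auto
  ultimately show ?thesis by blast
qed

lemma Arm_i: "Arm \<alpha> (i, Suc r) = insert (Suc i, Suc r) (Arm \<alpha> (Suc i, Suc r))"
  using i1 il hteq rh by (auto simp: Arm_Suc dg_def less_Suc_eq)

lemma Arm_i_notin: "(Suc i, Suc r) \<notin> Arm \<alpha> (Suc i, Suc r)"
  by (auto simp: Arm_Suc)

lemma Arm_Si_col: "v \<in> Arm \<alpha> (Suc i, Suc r) \<Longrightarrow> fst v \<noteq> i \<and> fst v \<noteq> Suc i"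
  using hteq by (auto simp: Arm_Suc)

lemma arm_i: "arm \<alpha> (i, Suc r) = Suc (arm \<alpha> (Suc i, Suc r))"
  unfolding arm_def Arm_i using Arm_i_notin finite_Arm by simp

lemma leg_i: "leg \<alpha> (i, Suc r) = leg \<alpha> (Suc i, Suc r)"
  using hteq by (simp add: leg_def)



lemma coinv_sum: "coinv_rows \<alpha> F r = (\<Sum>u\<in>{u\<in>dg \<alpha>. snd u = Suc r}. NN \<alpha> F u)"
proof -
  have "{(u, v). u \<in> dg \<alpha> \<and> snd u = r + 1 \<and> v \<in> Arm \<alpha> u
                                 \<and> chi3 (F u) (F v) (F (south u)) \<noteq> 1}
     = Sigma {u\<in>dg \<alpha>. snd u = Suc r} (\<lambda>u. {v \<in> Arm \<alpha> u. chi3 (F u) (F v) (F (south u)) \<noteq> 1})"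
    by auto
  thus ?thesis unfolding coinv_rows_def NN_def
    by (simp add: card_SigmaI finite_dg finite_Arm)
qed




lemma in_R: "(i, Suc r) \<in> {u\<in>dg \<alpha>. snd u = Suc r}" "(Suc i, Suc r) \<in> {u\<in>dg \<alpha>. snd u = Suc r}"
  using i1 il hteq rh by (auto simp: dg_def)

lemma finite_R: "finite {u\<in>dg \<alpha>. snd u = Suc r}" using finite_dg by simp

lemma wt_form: "wt q t \<alpha> F r = q ^ maj_row \<alpha> F (Suc r) * t ^ coinv_rows \<alpha> F r *
   ((if F (i, Suc r) \<noteq> F (i, r) then GG q t \<alpha> (i, Suc r) else 1) *
    ((if F (Suc i, Suc r) \<noteq> F (Suc i, r) then GG q t \<alpha> (Suc i, Suc r) else 1) *
    P0 q t \<alpha> i r F))"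
proof -
  let ?R = "{u\<in>dg \<alpha>. snd u = Suc r}"
  let ?f = "\<lambda>u. if F u \<noteq> F (south u) then GG q t \<alpha> u else 1"
  have e: "{u\<in>dg \<alpha>. snd u = r + 1 \<and> F u \<noteq> F (south u)} = {u \<in> ?R. F u \<noteq> F (south u)}" by auto
  have "(\<Prod>u\<in>{u\<in>dg \<alpha>. snd u = r + 1 \<and> F u \<noteq> F (south u)}. GG q t \<alpha> u) = prod ?f ?R"
    unfolding e by (rule prod.inter_filter[OF finite_R])
  also have "\<dots> = ?f (i, Suc r) * prod ?f (?R - {(i, Suc r)})"
    by (rule prod.remove[OF finite_R in_R(1)])
  also have "prod ?f (?R - {(i, Suc r)}) = ?f (Suc i, Suc r) * prod ?f (?R - {(i, Suc r)} - {(Suc i, Suc r)})"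
    by (rule prod.remove) (use finite_R in_R in auto)
  finally show ?thesis unfolding wt_def P0_def GG_def[symmetric]
    by (simp add: south_def)
qed

context
  fixes T U :: "nat \<times> nat \<Rightarrow> nat"
  assumes U0: "\<And>j. U (j, r) = T (sw i j, r)" and U1: "\<And>j. U (j, Suc r) = T (sw i j, Suc r)"
begin

lemma maj_eq: "maj_row \<alpha> U (Suc r) = maj_row \<alpha> T (Suc r)"
  unfolding maj_row_def
  apply (rule sum.reindex_bij_witness[where i = "\<lambda>(j,s). (sw i j, s)" and j = "\<lambda>(j,s). (sw i j, s)"])
  by (auto simp: south_def U0 U1 leg_def)

lemma U_Arm: "v \<in> Arm \<alpha> (j, Suc r) \<Longrightarrow> U v = T (sw i (fst v), snd v)"
  by (auto simp: Arm_Suc U0 U1)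

lemma NN_other: "j \<noteq> i \<Longrightarrow> j \<noteq> Suc i \<Longrightarrow> NN \<alpha> U (j, Suc r) = NN \<alpha> T (j, Suc r)"
  unfolding NN_def
proof (rule bij_betw_same_card[of "\<lambda>(j', s). (sw i j', s)"], rule bij_betw_byWitness[where f' = "\<lambda>(j', s). (sw i j', s)"])
  assume j: "j \<noteq> i" "j \<noteq> Suc i"
  have sj: "sw i j = j" using j by (simp add: sw_def)
  show "\<forall>a\<in>{v \<in> Arm \<alpha> (j, Suc r). chi3 (U (j, Suc r)) (U v) (U (south (j, Suc r))) \<noteq> 1}.
       (case (case a of (j', s) \<Rightarrow> (sw i j', s)) of (j', s) \<Rightarrow> (sw i j', s)) = a" by auto
  show "\<forall>a'\<in>{v \<in> Arm \<alpha> (j, Suc r). chi3 (T (j, Suc r)) (T v) (T (south (j, Suc r))) \<noteq> 1}.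
       (case (case a' of (j', s) \<Rightarrow> (sw i j', s)) of (j', s) \<Rightarrow> (sw i j', s)) = a'" by auto
  show "(\<lambda>(j', s). (sw i j', s)) ` {v \<in> Arm \<alpha> (j, Suc r). chi3 (U (j, Suc r)) (U v) (U (south (j, Suc r))) \<noteq> 1}
    \<subseteq> {v \<in> Arm \<alpha> (j, Suc r). chi3 (T (j, Suc r)) (T v) (T (south (j, Suc r))) \<noteq> 1}"
    using Arm_sw[OF j] U_Arm by (auto simp: south_def U0 U1 sj)
  show "(\<lambda>(j', s). (sw i j', s)) ` {v \<in> Arm \<alpha> (j, Suc r). chi3 (T (j, Suc r)) (T v) (T (south (j, Suc r))) \<noteq> 1}
    \<subseteq> {v \<in> Arm \<alpha> (j, Suc r). chi3 (U (j, Suc r)) (U v) (U (south (j, Suc r))) \<noteq> 1}"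
  proof
    fix x assume "x \<in> (\<lambda>(j', s). (sw i j', s)) ` {v \<in> Arm \<alpha> (j, Suc r). chi3 (T (j, Suc r)) (T v) (T (south (j, Suc r))) \<noteq> 1}"
    then obtain j' s where x: "x = (sw i j', s)" and m: "(j', s) \<in> Arm \<alpha> (j, Suc r)"
      and c: "chi3 (T (j, Suc r)) (T (j', s)) (T (south (j, Suc r))) \<noteq> 1" by auto
    have m2: "x \<in> Arm \<alpha> (j, Suc r)" using m Arm_sw[OF j] x by simp
    have "U x = T (j', s)" using U_Arm[OF m2] x by simp
    thus "x \<in> {v \<in> Arm \<alpha> (j, Suc r). chi3 (U (j, Suc r)) (U v) (U (south (j, Suc r))) \<noteq> 1}"
      using m2 c by (simp add: south_def U0 U1 sj)
  qed
qed


lemma U_Arm_Si: "v \<in> Arm \<alpha> (Suc i, Suc r) \<Longrightarrow> U v = T v"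
  using U_Arm[of v "Suc i"] Arm_Si_col[of v] by (cases v) (simp add: sw_def)

lemma NN_i: "NN \<alpha> U (i, Suc r) = (if chi3 (T (Suc i, Suc r)) (T (i, Suc r)) (T (Suc i, r)) \<noteq> 1 then 1 else 0)
   + NN \<alpha> T (Suc i, Suc r)"
proof -
  have "NN \<alpha> U (i, Suc r) = (if chi3 (T (Suc i, Suc r)) (T (i, Suc r)) (T (Suc i, r)) \<noteq> 1 then 1 else 0)
     + card {v \<in> Arm \<alpha> (Suc i, Suc r). chi3 (U (i, Suc r)) (U v) (U (i, r)) \<noteq> 1}"
    unfolding NN_def Arm_i
    by (subst card_insert_filter[OF finite_Arm Arm_i_notin]) (simp add: south_def U0 U1 sw_def)
  also have "{v \<in> Arm \<alpha> (Suc i, Suc r). chi3 (U (i, Suc r)) (U v) (U (i, r)) \<noteq> 1}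
     = {v \<in> Arm \<alpha> (Suc i, Suc r). chi3 (T (Suc i, Suc r)) (T v) (T (south (Suc i, Suc r))) \<noteq> 1}"
    using U_Arm_Si by (auto simp: south_def U0 U1 sw_def)
  finally show ?thesis by (simp add: NN_def)
qed

lemma NN_Si: "NN \<alpha> T (i, Suc r) = (if chi3 (T (i, Suc r)) (T (Suc i, Suc r)) (T (i, r)) \<noteq> 1 then 1 else 0)
   + NN \<alpha> U (Suc i, Suc r)"
proof -
  have "NN \<alpha> T (i, Suc r) = (if chi3 (T (i, Suc r)) (T (Suc i, Suc r)) (T (i, r)) \<noteq> 1 then 1 else 0)
     + card {v \<in> Arm \<alpha> (Suc i, Suc r). chi3 (T (i, Suc r)) (T v) (T (i, r)) \<noteq> 1}"
    unfolding NN_def Arm_i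
    by (subst card_insert_filter[OF finite_Arm Arm_i_notin]) (simp add: south_def)
  also have "{v \<in> Arm \<alpha> (Suc i, Suc r). chi3 (T (i, Suc r)) (T v) (T (i, r)) \<noteq> 1}
     = {v \<in> Arm \<alpha> (Suc i, Suc r). chi3 (U (Suc i, Suc r)) (U v) (U (south (Suc i, Suc r))) \<noteq> 1}"
    using U_Arm_Si by (auto simp: south_def U0 U1 sw_def)
  finally show ?thesis by (simp add: NN_def)
qed

lemma coinv_rel: "coinv_rows \<alpha> U r + (if chi3 (T (i, Suc r)) (T (Suc i, Suc r)) (T (i, r)) \<noteq> 1 then 1 else 0)
  = coinv_rows \<alpha> T r + (if chi3 (T (Suc i, Suc r)) (T (i, Suc r)) (T (Suc i, r)) \<noteq> 1 then 1 else 0)"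
proof -
  let ?R = "{u\<in>dg \<alpha>. snd u = Suc r}"
  have split: "sum f ?R = f (i, Suc r) + (f (Suc i, Suc r) + sum f (?R - {(i, Suc r)} - {(Suc i, Suc r)}))" for f
  proof -
    have "sum f ?R = f (i, Suc r) + sum f (?R - {(i, Suc r)})"
      by (rule sum.remove[OF finite_R in_R(1)])
    also have "sum f (?R - {(i, Suc r)}) = f (Suc i, Suc r) + sum f (?R - {(i, Suc r)} - {(Suc i, Suc r)})"
      by (rule sum.remove) (use finite_R in_R in auto)
    finally show ?thesis .
  qed
  have o: "sum (NN \<alpha> U) (?R - {(i, Suc r)} - {(Suc i, Suc r)}) = sum (NN \<alpha> T) (?R - {(i, Suc r)} - {(Suc i, Suc r)})"
    by (rule sum.cong) (auto intro: NN_other)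
  show ?thesis unfolding coinv_sum split o using NN_i NN_Si by simp
qed

lemma P0_eq: "P0 q t \<alpha> i r U = P0 q t \<alpha> i r T"
  unfolding P0_def by (rule prod.cong) (auto simp: south_def U0 U1 sw_def)

end

end

lemma Fract_pow: "(Fract (a::'a::idom) 1) ^ n = Fract (a ^ n) 1"
  by (induction n) (simp_all add: One_fract_def mult_fract)

lemma nz: "1 - qv ^ m * tv ^ Suc n \<noteq> 0"
proof
  assume h: "1 - qv ^ m * tv ^ Suc n = 0"
  let ?P = "[:[:0, 1:]:] ^ m * [:0, 1:] ^ Suc n :: int poly poly"
  have "qv ^ m * tv ^ Suc n = Fract ?P 1" unfolding qv_def tv_def Fract_pow by (simp add: mult_fract)
  hence "Fract (1 - ?P) 1 = 0" using h by (simp add: One_fract_def diff_fract)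
  hence "1 - ?P = 0" by (simp add: eq_fract Zero_fract_def)
  hence "poly (1 - ?P) 0 = 0" by simp
  thus False by simp
qed

theorem lemma3p10:
  fixes \<alpha> \<sigma> :: "nat list" and i h r :: nat and T :: "nat \<times> nat \<Rightarrow> nat"
  assumes "is_perm (length \<alpha>) \<sigma>"
    and "1 \<le> i" and "i < length \<alpha>"
    and "ht \<alpha> i = ht \<alpha> (i + 1)"
    and "T \<in> NAF \<alpha> \<sigma>"
    and "h \<le> ht \<alpha> i"
    and "nonattacking \<alpha> (Omega i h T)"
    and "r < h"
  shows "wt qv tv \<alpha> (Omega i h T) r * rho qv tv \<alpha> i (Omega i h T) r
       = wt qv tv \<alpha> T r * rho qv tv \<alpha> i T r"
proof -
  define U where "U = Omega i h T"
  have i1: "1 \<le> i" and il: "i < length \<alpha>" and hteq: "ht \<alpha> i = ht \<alpha> (Suc i)"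
    and rh: "Suc r \<le> ht \<alpha> i" using assms by auto
  have U0: "U (j, r) = T (sw i j, r)" for j using assms(8) by (simp add: U_def Omega_val)
  have U1: "U (j, Suc r) = T (sw i j, Suc r)" for j using assms(8) by (simp add: U_def Omega_val)
  have NT: "nonattacking \<alpha> T" using assms(5) by (simp add: NAF_def)
  have NU: "nonattacking \<alpha> U" using assms(7) by (simp add: U_def)
  have inadg: "(j, s) \<in> adg \<alpha>" if "j = i \<or> j = Suc i" "s \<le> Suc r" for j s
    using that i1 il hteq rh by (auto simp: adg_def dg_def)
  define a where "a = T (i, r)"
  define b where "b = T (Suc i, r)"
  define c where "c = T (i, Suc r)"
  define d where "d = T (Suc i, Suc r)"
  have ab: "a \<noteq> b" using NT inadg[of i r] inadg[of "Suc i" r] unfolding nonattacking_def a_def b_def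
    by (auto simp: attack_def)
  have cd: "c \<noteq> d" using NT inadg[of i "Suc r"] inadg[of "Suc i" "Suc r"] unfolding nonattacking_def c_def d_def
    by (auto simp: attack_def)
  have ad: "a \<noteq> d" using NT inadg[of i r] inadg[of "Suc i" "Suc r"] unfolding nonattacking_def a_def d_def
    by (auto simp: attack_def)
  have bc: "b \<noteq> c"
  proof -
    have "U (Suc i, Suc r) \<noteq> U (i, r)" using NU inadg[of i r] inadg[of "Suc i" "Suc r"] unfolding nonattacking_def
      by (auto simp: attack_def)
    thus ?thesis by (simp add: U0 U1 sw_def b_def c_def)
  qed
  have Ua: "U (i, r) = b" "U (Suc i, r) = a" "U (i, Suc r) = d" "U (Suc i, Suc r) = c"
    by (simp_all add: U0 U1 sw_def a_def b_def c_def d_def)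
  define A where "A = arm \<alpha> (Suc i, Suc r)"
  define l where "l = leg \<alpha> (Suc i, Suc r)"
  have rT: "rho qv tv \<alpha> i T r = (if card {a, b, c, d} = 4 then
          (if chi3 c d a = chi3 c d b then 0
           else if chi3 c d a = chi3 d c b then 1 else 0)
        else if card {a, b, c, d} = 3 then
          (if b = c then 0
           else if b = d then 1
           else if a = c then
             tv powi (1 - chi3 d a b) * (1 - qv ^ (l + 1) * tv ^ (A + 1)) / (1 - qv ^ (l + 1) * tv ^ (A + 2))
           else 0)
        else if a = c \<and> b = d then 1
        else 0)"
    unfolding rho_def Let_def a_def b_def c_def d_def A_def l_def Suc_eq_plus1 by (rule refl)
  have rU: "rho qv tv \<alpha> i U r = (if card {b, a, d, c} = 4 then
          (if chi3 d c b = chi3 d c a then 0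
           else if chi3 d c b = chi3 c d a then 1 else 0)
        else if card {b, a, d, c} = 3 then
          (if a = d then 0
           else if a = c then 1
           else if b = d then
             tv powi (1 - chi3 c b a) * (1 - qv ^ (l + 1) * tv ^ (A + 1)) / (1 - qv ^ (l + 1) * tv ^ (A + 2))
           else 0)
        else if b = d \<and> a = c then 1
        else 0)"
    unfolding rho_def Let_def A_def l_def Ua[unfolded Suc_eq_plus1] Suc_eq_plus1 by (rule refl)
  have wT: "wt qv tv \<alpha> T r = qv ^ maj_row \<alpha> T (Suc r) * tv ^ coinv_rows \<alpha> T r *
   ((if c \<noteq> a then GG qv tv \<alpha> (i, Suc r) else 1) *
    ((if d \<noteq> b then GG qv tv \<alpha> (Suc i, Suc r) else 1) * P0 qv tv \<alpha> i r T))"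
    using wt_form[OF i1 il hteq rh, of qv tv T] by (simp add: a_def b_def c_def d_def)
  have wU: "wt qv tv \<alpha> U r = qv ^ maj_row \<alpha> T (Suc r) * tv ^ coinv_rows \<alpha> U r *
   ((if d \<noteq> b then GG qv tv \<alpha> (i, Suc r) else 1) *
    ((if c \<noteq> a then GG qv tv \<alpha> (Suc i, Suc r) else 1) * P0 qv tv \<alpha> i r T))"
    unfolding wt_form[OF i1 il hteq rh, of qv tv U] Ua maj_eq[OF i1 il hteq rh, of U T, OF U0 U1]
      P0_eq[OF i1 il hteq rh, of U T, OF U0 U1] by (rule refl)
  have cr: "coinv_rows \<alpha> U r + (if chi3 c d a \<noteq> 1 then 1 else 0) = coinv_rows \<alpha> T r + (if chi3 d c b \<noteq> 1 then 1 else 0)"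
    using coinv_rel[OF i1 il hteq rh, of U T] U0 U1 by (simp add: a_def b_def c_def d_def)
  have G1: "GG qv tv \<alpha> (i, Suc r) = (1 - tv) / (1 - qv ^ (l + 1) * tv ^ (A + 2))"
    by (simp add: GG_def leg_i[OF i1 il hteq rh] arm_i[OF i1 il hteq rh] A_def l_def ac_simps)
  have G0: "GG qv tv \<alpha> (Suc i, Suc r) = (1 - tv) / (1 - qv ^ (l + 1) * tv ^ (A + 1))"
    unfolding GG_def A_def l_def by (simp add: ac_simps)
  have X1: "1 - qv ^ (l + 1) * tv ^ (A + 1) \<noteq> 0" using nz[of "l+1" A] by simp
  have X2: "1 - qv ^ (l + 1) * tv ^ (A + 2) \<noteq> 0" using nz[of "l+1" "Suc A"] by (simp add: numeral_2_eq_2)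
  define Y1 where "Y1 = 1 - qv ^ (l + 1) * tv ^ (A + 1)"
  define Y2 where "Y2 = 1 - qv ^ (l + 1) * tv ^ (A + 2)"
  have s1: "chi3 d c z = 1 - chi3 c d z" for z using chi3_swap[OF cd] .
  have dist: "chi3 x y z = 0 \<or> chi3 x y z = 1" for x y z using chi3_dist .
  have "wt qv tv \<alpha> U r * rho qv tv \<alpha> i U r = wt qv tv \<alpha> T r * rho qv tv \<alpha> i T r"
  proof -
    consider (D) "a \<noteq> c" "b \<noteq> d" | (AC) "a = c" "b \<noteq> d" | (BD) "a \<noteq> c" "b = d" | (E) "a = c" "b = d"
      by blast
    thus ?thesis
    proof cases
      case D
      have c4: "card {a, b, c, d} = 4" "card {b, a, d, c} = 4" using D ab cd ad bc by auto
      show ?thesis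
      proof (cases "chi3 c d a = chi3 c d b")
        case True
        thus ?thesis unfolding rT rU c4 using s1[of a] s1[of b] by simp
      next
        case False
        have e: "chi3 c d a = chi3 d c b" using False s1[of b] dist[of c d a] dist[of c d b] by auto
        have e2: "chi3 d c b \<noteq> chi3 d c a" using False s1[of b] s1[of a] by auto
        have k: "coinv_rows \<alpha> U r = coinv_rows \<alpha> T r" using cr e by simp
        show ?thesis unfolding rT rU c4 wT wU k using False e e2 D by simp
      qed
    next
      case AC
      have "{a, b, c, d} = {b, c, d}" "{b, a, d, c} = {b, c, d}" using AC by auto
      hence c3: "card {a, b, c, d} = 3" "card {b, a, d, c} = 3" using AC ab cd ad bc by auto
      have x: "chi3 c d a = 1" using AC chi3_xyx ad by simp
      have k: "coinv_rows \<alpha> U r = coinv_rows \<alpha> T r + (if chi3 d a b \<noteq> 1 then 1 else 0)"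
        using cr x AC by simp
      have rU1: "rho qv tv \<alpha> i U r = 1" unfolding rU c3 using AC ad by simp
      have rT1: "rho qv tv \<alpha> i T r = tv powi (1 - chi3 d a b) * Y1 / Y2"
        unfolding rT c3 Y1_def Y2_def using AC bc ab by simp
      have wU1: "wt qv tv \<alpha> U r = qv ^ maj_row \<alpha> T (Suc r) * tv ^ coinv_rows \<alpha> U r * ((1 - tv) / Y2 * P0 qv tv \<alpha> i r T)"
        unfolding wU G1 Y2_def using AC ad by simp
      have wT1: "wt qv tv \<alpha> T r = qv ^ maj_row \<alpha> T (Suc r) * tv ^ coinv_rows \<alpha> T r * ((1 - tv) / Y1 * P0 qv tv \<alpha> i r T)"
        unfolding wT G0 Y1_def using AC ad by simp
      have pw: "tv ^ coinv_rows \<alpha> U r = tv ^ coinv_rows \<alpha> T r * tv powi (1 - chi3 d a b)"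
        using dist[of d a b] unfolding k by auto
      show ?thesis unfolding rU1 rT1 wU1 wT1 pw using X1 X2 unfolding Y1_def[symmetric] Y2_def[symmetric]
        by (simp add: field_simps)
    next
      case BD
      have "{a, b, c, d} = {a, c, d}" "{b, a, d, c} = {a, c, d}" using BD by auto
      hence c3: "card {a, b, c, d} = 3" "card {b, a, d, c} = 3" using BD ab cd ad bc by auto
      have x: "chi3 d c b = 1" using BD chi3_xyx bc by simp
      have k: "coinv_rows \<alpha> T r = coinv_rows \<alpha> U r + (if chi3 c b a \<noteq> 1 then 1 else 0)"
        using cr x BD by simp
      have rT1: "rho qv tv \<alpha> i T r = 1" unfolding rT c3 using BD bc by simp
      have rU1: "rho qv tv \<alpha> i U r = tv powi (1 - chi3 c b a) * Y1 / Y2"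
        unfolding rU c3 Y1_def Y2_def using BD ad ab by simp
      have wT1: "wt qv tv \<alpha> T r = qv ^ maj_row \<alpha> T (Suc r) * tv ^ coinv_rows \<alpha> T r * ((1 - tv) / Y2 * P0 qv tv \<alpha> i r T)"
        unfolding wT G1 Y2_def using BD by simp
      have wU1: "wt qv tv \<alpha> U r = qv ^ maj_row \<alpha> T (Suc r) * tv ^ coinv_rows \<alpha> U r * ((1 - tv) / Y1 * P0 qv tv \<alpha> i r T)"
        unfolding wU G0 Y1_def using BD by simp
      have pw: "tv ^ coinv_rows \<alpha> T r = tv ^ coinv_rows \<alpha> U r * tv powi (1 - chi3 c b a)"
        using dist[of c b a] unfolding k by auto
      show ?thesis unfolding rU1 rT1 wU1 wT1 pw using X1 X2 unfolding Y1_def[symmetric] Y2_def[symmetric]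
        by (simp add: field_simps)
    next
      case E
      have "{a, b, c, d} = {a, b}" "{b, a, d, c} = {a, b}" using E by auto
      hence c2: "card {a, b, c, d} = 2" "card {b, a, d, c} = 2" using E ab by auto
      have k: "coinv_rows \<alpha> U r = coinv_rows \<alpha> T r" using cr E chi3_xyx ab by simp
      show ?thesis unfolding rT rU c2 wT wU k using E by simp
    qed
  qed
  thus ?thesis by (simp add: U_def)
qed

end
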